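(* Let $\bar f:[-1,0]\to\mathbb R$ be continuous with $0<\bar f(x)<1/2$ for all $x\in[-1,0]$, and let $b=\sqrt{1-2\bar f(-1)}\in(0,1)$. Let $\bar T$ be a solution of $(1-x^2)\frac{d\bar T}{dx}+\bar T^2=-2(1-x^2)+(1-2\bar f(x))$, continuous at $x=-1$ with $\bar T(-1)=b$. Then $\bar T$ can be extended as a solution to the whole interval $[-1,0]$, and $\bar T(0)<0$. *)

theory Defs
  imports "HOL-Analysis.Analysis"
begin

end

theory Submission
  imports Defs
begin


lemma ode_exists:
  fixes G :: "real \<Rightarrow> real \<Rightarrow> real" and a b y0 K :: real
  assumes ab: "a \<le> b" and K: "K \<ge> 0"
    and Gcont: "\<And>\<phi>. continuous_on {a..b} \<phi> \<Longrightarrow> continuous_on {a..b} (\<lambda>t. G t (\<phi> t))"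
    and Glip: "\<And>t u v. t \<in> {a..b} \<Longrightarrow> \<bar>G t u - G t v\<bar> \<le> K * \<bar>u - v\<bar>"
  shows "\<exists>\<phi>. \<phi> a = y0 \<and> (\<forall>x\<in>{a..b}. (\<phi> has_real_derivative G x (\<phi> x)) (at x within {a..b}))"
proof -
  define L where "L = 2*K + 1"
  have L: "L > 0" "K / L \<le> 1/2" using K by (auto simp: L_def field_simps)
  define cl where "cl x = max a (min b x)" for x :: real
  have cl_in: "cl x \<in> {a..b}" for x using ab by (auto simp: cl_def)
  have cl_id: "x \<in> {a..b} \<Longrightarrow> cl x = x" for x by (auto simp: cl_def)
  have cl_cont: "continuous_on UNIV cl" unfolding cl_def by (intro continuous_intros)
  define g where "g \<psi> = (\<lambda>t. G t (exp (L*t) * \<psi> t))" for \<psi> :: "real \<Rightarrow> real"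
  define H where "H \<psi> = (\<lambda>x. exp (-L * x) * (y0 + integral {a..x} (g \<psi>)))" for \<psi> :: "real \<Rightarrow> real"
  define F where "F \<psi> = (\<lambda>x. H \<psi> (cl x))" for \<psi> :: "real \<Rightarrow> real"
  have gcont: "continuous_on {a..b} (g \<psi>)" if "continuous_on UNIV \<psi>" for \<psi>
    unfolding g_def
    by (rule Gcont) (auto intro!: continuous_intros continuous_on_subset[OF that])
  have Hcont: "continuous_on {a..b} (H \<psi>)" if "continuous_on UNIV \<psi>" for \<psi>
  proof -
    have "continuous_on {a..b} (\<lambda>x. integral {a..x} (g \<psi>))"
      by (rule indefinite_integral_continuous_1[OF integrable_continuous_real[OF gcont[OF that]]])
    then show ?thesis unfolding H_def by (intro continuous_intros)
  qed
  have Fbc: "F \<psi> \<in> bcontfun" if "continuous_on UNIV \<psi>" for \<psi>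
  proof -
    have c: "continuous_on UNIV (F \<psi>)"
    proof -
      have "range cl \<subseteq> {a..b}" using cl_in by auto
      from continuous_on_compose[OF cl_cont continuous_on_subset[OF Hcont[OF that] this]]
      show ?thesis by (simp add: o_def F_def)
    qed
    have "bounded (H \<psi> ` {a..b})"
      by (rule compact_imp_bounded[OF compact_continuous_image[OF Hcont[OF that]]]) simp
    moreover have "range (F \<psi>) \<subseteq> H \<psi> ` {a..b}" using cl_in by (auto simp: F_def)
    ultimately have "bounded (range (F \<psi>))" by (rule bounded_subset)
    with c show ?thesis by (simp add: bcontfun_def)
  qed
  define \<Phi> where "\<Phi> \<psi> = Bcontfun (F (apply_bcontfun \<psi>))" for \<psi> :: "real \<Rightarrow>\<^sub>C real"
  have Phi_ap: "apply_bcontfun (\<Phi> \<psi>) = F (apply_bcontfun \<psi>)" for \<psi>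
    unfolding \<Phi>_def by (rule Bcontfun_inverse[OF Fbc]) simp
  have contr: "dist (\<Phi> \<psi>1) (\<Phi> \<psi>2) \<le> (1/2) * dist \<psi>1 \<psi>2" for \<psi>1 \<psi>2
  proof (rule dist_bound)
    fix x
    define D where "D = dist \<psi>1 \<psi>2"
    define s where "s = cl x"
    have s: "s \<in> {a..b}" using cl_in s_def by auto
    have D0: "D \<ge> 0" by (simp add: D_def)
    let ?g1 = "g (apply_bcontfun \<psi>1)" and ?g2 = "g (apply_bcontfun \<psi>2)"
    have c1: "continuous_on {a..s} ?g1" "continuous_on {a..s} ?g2"
      using s by (auto intro!: continuous_on_subset[OF gcont])
    have i1: "?g1 integrable_on {a..s}" "?g2 integrable_on {a..s}"
      using c1 by (auto intro: integrable_continuous_real)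
    have bnd: "norm (?g1 t - ?g2 t) \<le> K * D * exp (L*t)" if "t \<in> {a..s}" for t
    proof -
      have "\<bar>?g1 t - ?g2 t\<bar> \<le> K * \<bar>exp (L*t) * \<psi>1 t - exp (L*t) * \<psi>2 t\<bar>"
        unfolding g_def using that s by (intro Glip) auto
      also have "\<dots> = K * exp (L*t) * \<bar>\<psi>1 t - \<psi>2 t\<bar>"
        by (simp add: abs_mult right_diff_distrib[symmetric])
      also have "\<dots> \<le> K * exp (L*t) * D"
        using dist_bounded[of \<psi>1 t \<psi>2] K by (intro mult_left_mono) (auto simp: D_def dist_real_def)
      finally show ?thesis by (simp add: mult_ac)
    qed
    have ei: "((\<lambda>t. K * D * exp (L*t)) has_integral (K*D*exp (L * s)/L - K*D*exp(L*a)/L)) {a..s}"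
    proof -
      have "((\<lambda>t. K * D * exp (L*t) / L) has_vector_derivative K * D * exp (L*t)) (at t within {a..s})" for t
        unfolding has_real_derivative_iff_has_vector_derivative[symmetric]
        using L by (auto intro!: derivative_eq_intros)
      from fundamental_theorem_of_calculus[OF _ this] s show ?thesis by auto
    qed
    have "norm (integral {a..s} (\<lambda>t. ?g1 t - ?g2 t)) \<le> integral {a..s} (\<lambda>t. K * D * exp (L*t))"
      by (rule Henstock_Kurzweil_Integration.integral_norm_bound_integral)
         (use i1 ei bnd in \<open>auto intro: integrable_diff has_integral_integrable\<close>)
    also have "\<dots> = K*D*exp (L * s)/L - K*D*exp(L*a)/L" using ei by (rule integral_unique)
    also have "\<dots> \<le> K*D*exp (L * s)/L" using K D0 L by auto
    finally have I: "\<bar>integral {a..s} ?g1 - integral {a..s} ?g2\<bar> \<le> K*D*exp (L * s)/L"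
      using integral_diff[OF i1] by simp
    have "dist (\<Phi> \<psi>1 x) (\<Phi> \<psi>2 x) = exp (-L * s) * \<bar>integral {a..s} ?g1 - integral {a..s} ?g2\<bar>"
      by (simp add: Phi_ap F_def H_def s_def dist_real_def abs_mult right_diff_distrib[symmetric])
    also have "\<dots> \<le> exp (-L * s) * (K*D*exp (L * s)/L)" using I by (intro mult_left_mono) auto
    also have "\<dots> = (K/L) * D" by (simp add: field_simps exp_minus)
    also have "\<dots> \<le> (1/2) * D" using L D0 by (intro mult_right_mono) auto
    finally show "dist (\<Phi> \<psi>1 x) (\<Phi> \<psi>2 x) \<le> (1/2) * dist \<psi>1 \<psi>2" by (simp add: D_def)
  qed
  obtain \<psi> where fixp: "\<Phi> \<psi> = \<psi>" using banach_fix_type[of "1/2" \<Phi>] contr by auto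
  have psi_eq: "apply_bcontfun \<psi> x = F (apply_bcontfun \<psi>) x" for x
    using fixp Phi_ap by metis
  define \<phi> where "\<phi> t = exp (L*t) * \<psi> t" for t
  let ?g = "g (apply_bcontfun \<psi>)"
  have phi_eq: "\<phi> x = y0 + integral {a..x} ?g" if "x \<in> {a..b}" for x
    using psi_eq[of x] that by (simp add: \<phi>_def F_def H_def cl_id exp_minus field_simps)
  have gphi: "?g t = G t (\<phi> t)" for t by (simp add: g_def \<phi>_def)
  show ?thesis
  proof (intro exI conjI ballI)
    show "\<phi> a = y0" using phi_eq[of a] ab by simp
    fix x assume x: "x \<in> {a..b}"
    have "((\<lambda>u. y0 + integral {a..u} ?g) has_real_derivative ?g x) (at x within {a..b})"
      using integral_has_real_derivative[OF gcont x] by (auto intro!: derivative_eq_intros)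
    then have "(\<phi> has_real_derivative ?g x) (at x within {a..b})"
      by (rule has_field_derivative_transform_within[where d=1]) (use x phi_eq in auto)
    then show "(\<phi> has_real_derivative G x (\<phi> x)) (at x within {a..b})" by (simp add: gphi)
  qed
qed



lemma pos_barrier:
  fixes Z :: "real \<Rightarrow> real"
  assumes pq: "p \<le> q" and Zc: "continuous_on {p..q} Z" and Zp: "Z p > 0"
    and der: "\<And>x. x \<in> {p<..q} \<Longrightarrow> Z x = 0 \<Longrightarrow> \<exists>D>0. (Z has_real_derivative D) (at x within {p..q})"
    and x: "x \<in> {p..q}"
  shows "Z x > 0"
proof (rule ccontr)
  assume "\<not> Z x > 0"
  define A where "A = {p..q} \<inter> Z -` {..0}"
  have xA: "x \<in> A" using x \<open>\<not> Z x > 0\<close> by (auto simp: A_def)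
  have cA: "closed A" unfolding A_def by (rule continuous_closed_preimage[OF Zc]) auto
  have bA: "bdd_below A" by (auto simp: A_def bdd_below_def)
  define x1 where "x1 = Inf A"
  have x1A: "x1 \<in> A" unfolding x1_def using closed_contains_Inf[of A] xA bA cA by auto
  have x1le: "\<And>t. t \<in> A \<Longrightarrow> x1 \<le> t" unfolding x1_def using bA by (simp add: cInf_lower)
  have x1: "p \<le> x1" "x1 \<le> q" "Z x1 \<le> 0" using x1A by (auto simp: A_def)
  have px1: "p < x1" using x1 Zp by (cases "p = x1") auto
  have pos: "Z t > 0" if "p \<le> t" "t < x1" for t
  proof (rule ccontr)
    assume "\<not> Z t > 0"
    then have "t \<in> A" using that x1 by (auto simp: A_def)
    with x1le[of t] that show False by auto
  qed
  have Z0: "Z x1 = 0"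
  proof (rule ccontr)
    assume "Z x1 \<noteq> 0"
    with x1 have "Z x1 < 0" by auto
    obtain t where t: "p \<le> t" "t \<le> x1" "Z t = 0"
      using IVT2'[of Z x1 0 p] \<open>Z x1 < 0\<close> Zp px1 continuous_on_subset[OF Zc, of "{p..x1}"] x1
      by fastforce
    with \<open>Z x1 < 0\<close> have "t < x1" by (cases "t = x1") auto
    with pos[of t] t show False by auto
  qed
  obtain D where D: "D > 0" "(Z has_real_derivative D) (at x1 within {p..q})"
    using der[of x1] x1 px1 Z0 by auto
  obtain d where d: "d > 0" "\<And>h. h > 0 \<Longrightarrow> x1 - h \<in> {p..q} \<Longrightarrow> h < d \<Longrightarrow> Z (x1 - h) < Z x1"
    using has_real_derivative_pos_inc_left[OF D(2) D(1)] by blast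
  define h where "h = min d (x1 - p) / 2"
  have h: "h > 0" "h < d" "x1 - h \<in> {p..q}" "p \<le> x1 - h" "x1 - h < x1"
  proof -
    have "min d (x1 - p) \<le> x1 - p" "min d (x1 - p) > 0" "min d (x1 - p) \<le> d" using d px1 by auto
    then show "h > 0" "h < d" "x1 - h \<in> {p..q}" "p \<le> x1 - h" "x1 - h < x1"
      using x1 d px1 unfolding h_def by (auto simp: min_def)
  qed
  from d(2)[OF h(1) h(3) h(2)] Z0 pos[OF h(4) h(5)] show False by auto
qed



lemma sol_barrier:
  fixes f y :: "real \<Rightarrow> real" and \<beta> p q x :: real
  assumes \<beta>: "\<beta> > 0" and fb: "\<And>x. x \<in> {-1..0} \<Longrightarrow> 0 < f x \<and> 8*\<beta> \<le> 1 - 2*f x"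
    and pq: "-1 \<le> p" "p \<le> q" "q \<le> 0" and yc: "continuous_on {p..q} y"
    and Z1p: "(1-p^2)*(1+2*\<beta>*p) - y p * (p - \<beta>*(1-p^2)) > 0" and Z2p: "-p - y p > 0"
    and der: "\<And>x. x \<in> {p<..q} \<Longrightarrow> \<bar>y x\<bar> \<le> 1/\<beta> \<Longrightarrow> \<exists>D. (y has_real_derivative D) (at x within {p..q}) \<and>
         (1 - x^2) * D + (y x)^2 = -2 * (1 - x^2) + (1 - 2 * f x)"
    and x: "x \<in> {p..q}"
  shows "(1-x^2)*(1+2*\<beta>*x) - y x * (x - \<beta>*(1-x^2)) > 0 \<and> -x - y x > 0 \<and> \<bar>y x\<bar> < 1/\<beta>"
proof -
  have \<beta>8: "8*\<beta> < 1" using fb[of 0] by auto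
  have inv1: "1 \<le> 1/\<beta>" using \<beta> \<beta>8 by (simp add: field_simps)
  have Z2: "-x - y x > 0"
  proof (rule pos_barrier[where Z="\<lambda>x. -x - y x", OF pq(2) _ Z2p _ x])
    show "continuous_on {p..q} (\<lambda>x. -x - y x)" using yc by (intro continuous_intros)
    fix t assume t: "t \<in> {p<..q}" and z: "-t - y t = 0"
    have t1: "-1 < t" "t \<le> 0" using t pq by auto
    have "\<bar>y t\<bar> \<le> 1/\<beta>" using z t1 inv1 by auto
    then obtain D where D: "(y has_real_derivative D) (at t within {p..q})"
      "(1 - t^2) * D + (y t)^2 = -2 * (1 - t^2) + (1 - 2 * f t)" using der[OF t] by auto
    have ft: "f t > 0" using fb[of t] t1 by auto
    have pos: "1 - t^2 > 0" using t1 by (simp add: abs_square_less_1)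
    have yt: "y t = -t" using z by simp
    have "(1 - t^2) * (-1 - D) = 2 * f t" using D(2) yt by (simp add: algebra_simps power2_eq_square)
    then have "(1 - t^2) * (-1 - D) > 0" using ft by simp
    then have "-1 - D > 0" using pos by (simp add: zero_less_mult_iff)
    moreover have "((\<lambda>x. -x - y x) has_real_derivative (-1 - D)) (at t within {p..q})"
      using D(1) by (auto intro!: derivative_eq_intros)
    ultimately show "\<exists>D>0. ((\<lambda>x. -x - y x) has_real_derivative D) (at t within {p..q})" by blast
  qed
  have Z1: "(1-x^2)*(1+2*\<beta>*x) - y x * (x - \<beta>*(1-x^2)) > 0"
  proof (rule pos_barrier[where Z="\<lambda>x. (1-x^2)*(1+2*\<beta>*x) - y x * (x - \<beta>*(1-x^2))", OF pq(2) _ Z1p _ x])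
    show "continuous_on {p..q} (\<lambda>x. (1-x^2)*(1+2*\<beta>*x) - y x * (x - \<beta>*(1-x^2)))"
      using yc by (intro continuous_intros)
    fix t assume t: "t \<in> {p<..q}" and z: "(1-t^2)*(1+2*\<beta>*t) - y t * (t - \<beta>*(1-t^2)) = 0"
    have t1: "-1 < t" "t \<le> 0" using t pq by auto
    have pos: "1 - t^2 > 0" using t1 by (simp add: abs_square_less_1)
    have tsq: "t^2 \<le> -t"
    proof -
      have "t * (t + 1) \<le> 0" using t1 by (intro mult_nonpos_nonneg) auto
      then show ?thesis by (simp add: power2_eq_square algebra_simps)
    qed
    define w where "w = t - \<beta>*(1-t^2)"
    define wp where "wp = 1 + 2*\<beta>*t"
    have wle: "-w \<ge> \<beta>"
    proof -
      have "-w - \<beta> = -t - \<beta> * t^2" by (simp add: w_def algebra_simps)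
      also have "\<dots> \<ge> 0"
      proof -
        have "\<beta> * t^2 \<le> 1 * t^2" using \<beta>8 by (intro mult_right_mono) auto
        then show ?thesis using tsq by linarith
      qed
      finally show ?thesis by simp
    qed
    have "\<beta> * t \<ge> \<beta> * (-1)" using t1 \<beta> by (intro mult_left_mono) auto
    moreover have "\<beta> * t \<le> 0" using t1 \<beta> by (simp add: mult_nonneg_nonpos)
    ultimately have wp01: "0 \<le> wp" "wp \<le> 1" using \<beta>8 by (auto simp: wp_def)
    have z': "y t * w = (1-t^2)*wp" using z by (simp add: w_def wp_def)
    have "\<bar>y t\<bar> * \<beta> \<le> \<bar>y t\<bar> * \<bar>w\<bar>" using wle \<beta> by (intro mult_left_mono) auto
    also have "\<dots> = (1-t^2)*wp" using z' pos wp01 by (metis abs_mult abs_of_nonneg less_imp_le mult_nonneg_nonneg)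
    also have "\<dots> \<le> 1" by (rule mult_le_one) (use pos wp01 in auto)
    finally have "\<bar>y t\<bar> \<le> 1/\<beta>" using \<beta> by (simp add: field_simps)
    then obtain D where D: "(y has_real_derivative D) (at t within {p..q})"
      "(1 - t^2) * D + (y t)^2 = -2 * (1 - t^2) + (1 - 2 * f t)" using der[OF t] by auto
    define E where "E = -2*t*(1+2*\<beta>*t) + (1-t^2)*(2*\<beta>) - (D*(t - \<beta>*(1-t^2)) + y t*(1+2*\<beta>*t))"
    have dz: "((\<lambda>x. (1-x^2)*(1+2*\<beta>*x) - y x * (x - \<beta>*(1-x^2))) has_real_derivative E) (at t within {p..q})"
      unfolding E_def using D(1) by (auto intro!: derivative_eq_intros)
    define e where "e = 1 - 2 * f t"
    have e: "e \<ge> 8*\<beta>" using fb[of t] t1 by (auto simp: e_def)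
    define P where "P = -2*t + 2*\<beta> - 6*\<beta>*t^2"
    have "(1-t^2)*E = (1-t^2)*P - ((1-t^2)*D)*w - y t*((1-t^2)*wp)"
      by (simp add: E_def P_def w_def wp_def algebra_simps power2_eq_square)
    also have "\<dots> = (1-t^2)*P - (-2 * (1 - t^2) + e - (y t)^2)*w - y t*(y t * w)"
    proof -
      have h1: "(1-t^2)*D = -2 * (1 - t^2) + e - (y t)^2" using D(2) by (simp add: e_def algebra_simps)
      show ?thesis unfolding h1 z'[symmetric] ..
    qed
    also have "\<dots> = (1-t^2)*(-4*\<beta>*t^2) + e*(-w)"
      by (simp add: P_def w_def algebra_simps power2_eq_square)
    also have "\<dots> \<ge> (1-t^2)*(-4*\<beta>*t^2) + (8*\<beta>)*(-w)"
      using e wle \<beta> by (intro add_left_mono mult_right_mono) auto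
    finally have E1: "(1-t^2)*E \<ge> \<beta> * (8*\<beta>*(1-t^2) + (-8*t - 4*t^2*(1-t^2)))"
      by (simp add: w_def algebra_simps power2_eq_square)
    have "t^2*(1-t^2) \<le> t^2" using pos by (simp add: mult_left_le)
    then have "-8*t - 4*t^2*(1-t^2) \<ge> 0" using tsq mult.assoc[of 4 "t^2" "1-t^2"] zero_le_power2[of t] by linarith
    moreover have "8*\<beta>*(1-t^2) > 0" using \<beta> pos by simp
    ultimately have "\<beta> * (8*\<beta>*(1-t^2) + (-8*t - 4*t^2*(1-t^2))) > 0" using \<beta> by (intro mult_pos_pos) auto
    then have "(1-t^2)*E > 0" using E1 by linarith
    then have "E > 0" using pos by (simp add: zero_less_mult_iff)
    with dz show "\<exists>D>0. ((\<lambda>x. (1-x^2)*(1+2*\<beta>*x) - y x * (x - \<beta>*(1-x^2))) has_real_derivative D) (at t within {p..q})"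
      by blast
  qed
  have bnd: "\<bar>y x\<bar> < 1/\<beta>"
  proof -
    have x1: "-1 \<le> x" "x \<le> 0" using x pq by auto
    have "y x < 1/\<beta>" using Z2 x1 inv1 by linarith
    moreover have "y x > -1/\<beta>"
    proof (rule ccontr)
      assume "\<not> y x > -1/\<beta>"
      then have yl: "y x \<le> -1/\<beta>" by simp
      define w where "w = x - \<beta>*(1-x^2)"
      have "x * (x + 1) \<le> 0" using x1 by (intro mult_nonpos_nonneg) auto
      then have xsq: "x^2 \<le> -x" "x^2 \<le> 1" using x1 by (auto simp: power2_eq_square algebra_simps)
      have wle: "-w \<ge> \<beta>"
      proof -
        have "-w - \<beta> = -x - \<beta> * x^2" by (simp add: w_def algebra_simps)
        also have "\<dots> \<ge> 0"
        proof -
          have "\<beta> * x^2 \<le> 1 * x^2" using \<beta>8 by (intro mult_right_mono) auto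
          then show ?thesis using xsq by linarith
        qed
        finally show ?thesis by simp
      qed
      have "y x * w \<ge> (-1/\<beta>) * w" using yl wle \<beta> by (intro mult_right_mono_neg) auto
      also have "(-1/\<beta>) * w = (-w)/\<beta>" by simp
      also have "(-w)/\<beta> \<ge> 1" using wle \<beta> by (simp add: field_simps)
      finally have "y x * w \<ge> 1" .
      moreover have "(1-x^2)*(1+2*\<beta>*x) \<le> 1"
      proof (rule mult_le_one)
        have "\<beta> * x \<ge> \<beta> * (-1)" using x1 \<beta> by (intro mult_left_mono) auto
        moreover have "\<beta> * x \<le> 0" using x1 \<beta> by (simp add: mult_nonneg_nonpos)
        ultimately show "0 \<le> 1+2*\<beta>*x" "1+2*\<beta>*x \<le> 1" using \<beta>8 by auto
      qed simp
      ultimately show False using Z1 by (simp add: w_def)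
    qed
    ultimately show ?thesis by auto
  qed
  show ?thesis using Z1 Z2 bnd by auto
qed



theorem proposition7:
  fixes f T :: "real \<Rightarrow> real" and c :: real
  assumes f_cont: "continuous_on {-1..0} f"
    and f_bounds: "\<And>x. x \<in> {-1..0} \<Longrightarrow> 0 < f x \<and> f x < 1/2"
    and c: "-1 < c" "c \<le> 0"
    and T_sol: "\<And>x. x \<in> {-1<..<c} \<Longrightarrow>
        \<exists>D. (T has_real_derivative D) (at x) \<and>
            (1 - x^2) * D + (T x)^2 = -2 * (1 - x^2) + (1 - 2 * f x)"
    and T_cont: "continuous (at_right (-1)) T"
    and T_init: "T (-1) = sqrt (1 - 2 * f (-1))"
  shows "\<exists>S. (\<forall>x \<in> {-1..<c}. S x = T x) \<and>
             continuous_on {-1..0} S \<and>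
             (\<forall>x \<in> {-1<..0}. \<exists>D. (S has_real_derivative D) (at x within {-1..0}) \<and>
                 (1 - x^2) * D + (S x)^2 = -2 * (1 - x^2) + (1 - 2 * f x)) \<and>
             S 0 < 0"
proof -
  obtain x0 where x0: "x0 \<in> {-1..0}" "\<forall>y\<in>{-1..0}. f y \<le> f x0"
    using continuous_attains_sup[OF compact_Icc _ f_cont] by auto
  define \<beta> where "\<beta> = (1 - 2 * f x0)/8"
  have \<beta>: "\<beta> > 0" using f_bounds[OF x0(1)] by (simp add: \<beta>_def)
  have fb: "\<And>x. x \<in> {-1..0} \<Longrightarrow> 0 < f x \<and> 8*\<beta> \<le> 1 - 2*f x"
    using f_bounds x0 by (auto simp: \<beta>_def)
  define M where "M = 1/\<beta>"
  have M: "M > 0" using \<beta> by (simp add: M_def)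
  define h where "h x = -2 * (1 - x^2) + (1 - 2 * f x)" for x
  have b: "0 < T (-1)" "T (-1) < 1" using f_bounds[of "-1"] by (auto simp: T_init)
  have Tcont: "continuous_on {-1..q} T" if "-1 < q" "q < c" for q
    unfolding continuous_on_eq_continuous_within
  proof
    fix x assume x: "x \<in> {-1..q}"
    show "continuous (at x within {-1..q}) T"
    proof (cases "x = -1")
      case True
      have "continuous (at (-1) within {-1..q}) T"
        using T_cont by (simp only: at_within_Icc_at_right[OF that(1)])
      then show ?thesis using True by simp
    next
      case False
      then have "x \<in> {-1<..<c}" using x that by auto
      then obtain D where D: "(T has_real_derivative D) (at x)" using T_sol by blast
      show ?thesis by (rule continuous_at_imp_continuous_at_within[OF DERIV_isCont[OF D]])
    qed
  qed
  have Tbar: "(1-x^2)*(1+2*\<beta>*x) - T x * (x - \<beta>*(1-x^2)) > 0 \<and> -x - T x > 0 \<and> \<bar>T x\<bar> < 1/\<beta>"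
    if x: "x \<in> {-1..<c}" for x
  proof (rule sol_barrier[where y=T and p="-1" and q="(x+c)/2" and x=x, OF \<beta> fb _ _ _ Tcont])
    show "-1 \<le> (-1::real)" "-1 \<le> (x+c)/2" "(x+c)/2 \<le> 0" "-1 < (x+c)/2" "(x+c)/2 < c" using x c by auto
    show "(1-(-1)^2)*(1+2*\<beta>*(-1)) - T (-1) * ((-1) - \<beta>*(1-(-1)^2)) > 0" using b by simp
    show "-(-1) - T (-1) > 0" using b by simp
    show "x \<in> {-1..(x+c)/2}" using x by simp
    fix t assume t: "t \<in> {-1<..(x+c)/2}"
    then have "t \<in> {-1<..<c}" using x by auto
    then obtain D where "(T has_real_derivative D) (at t)"
      "(1 - t^2) * D + (T t)^2 = -2 * (1 - t^2) + (1 - 2 * f t)" using T_sol by blast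
    then show "\<exists>D. (T has_real_derivative D) (at t within {-1..(x+c)/2}) \<and>
         (1 - t^2) * D + (T t)^2 = -2 * (1 - t^2) + (1 - 2 * f t)"
      by (auto intro: has_field_derivative_at_within)
  qed
  define a where "a = (c - 1)/2"
  have a: "-1 < a" "a < c" "a \<le> 0" using c by (auto simp: a_def)
  have a2: "1 - a^2 > 0" using a by (simp add: abs_square_less_1)
  define K where "K = 2*M/(1-a^2)"
  have K: "K \<ge> 0" using M a2 by (simp add: K_def)
  define clip where "clip y = max (-M) (min M y)" for y
  define G where "G t y = (h t - (clip y)^2)/(1 - t^2)" for t y
  have t2: "t^2 \<le> a^2" if "t \<in> {a..0}" for t
  proof -
    have "\<bar>t\<bar> \<le> \<bar>a\<bar>" using that by auto
    then show ?thesis by (simp add: abs_le_square_iff)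
  qed
  have Gcont: "continuous_on {a..0} (\<lambda>t. G t (\<psi> t))" if "continuous_on {a..0} \<psi>" for \<psi>
  proof -
    have fc: "continuous_on {a..0} f" using continuous_on_subset[OF f_cont] a by auto
    have nz: "\<forall>t\<in>{a..0}. 1 - t^2 \<noteq> 0" using t2 a2 by force
    show ?thesis unfolding G_def h_def clip_def using that fc nz by (intro continuous_intros) auto
  qed
  have clip_lip: "\<bar>clip u - clip v\<bar> \<le> \<bar>u - v\<bar>" for u v
    unfolding clip_def by (auto simp: max_def min_def abs_if)
  have clip_bnd: "\<bar>clip u\<bar> \<le> M" for u using M unfolding clip_def by (auto simp: max_def min_def)
  have Glip: "\<bar>G t u - G t v\<bar> \<le> K * \<bar>u - v\<bar>" if t: "t \<in> {a..0}" for t u v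
  proof -
    have pos: "1 - t^2 \<ge> 1 - a^2" using t2[OF t] by simp
    have "\<bar>(clip v)^2 - (clip u)^2\<bar> = \<bar>clip v + clip u\<bar> * \<bar>clip v - clip u\<bar>"
    proof -
      have "(clip v)^2 - (clip u)^2 = (clip v + clip u) * (clip v - clip u)"
        by (simp add: power2_eq_square algebra_simps)
      then show ?thesis by (simp add: abs_mult)
    qed
    also have "\<dots> \<le> (2*M) * \<bar>u - v\<bar>"
    proof (rule mult_mono)
      show "\<bar>clip v + clip u\<bar> \<le> 2*M" using clip_bnd[of u] clip_bnd[of v] by linarith
      show "\<bar>clip v - clip u\<bar> \<le> \<bar>u - v\<bar>" using clip_lip[of v u] by (simp add: abs_minus_commute)
    qed (use M in auto)
    finally have n: "\<bar>(clip v)^2 - (clip u)^2\<bar> \<le> 2*M*\<bar>u - v\<bar>" .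
    have "G t u - G t v = ((clip v)^2 - (clip u)^2) / (1 - t^2)"
      unfolding G_def by (simp add: diff_divide_distrib)
    then have "\<bar>G t u - G t v\<bar> = \<bar>(clip v)^2 - (clip u)^2\<bar> / (1 - t^2)"
      using pos a2 by simp
    also have "\<dots> \<le> 2*M*\<bar>u - v\<bar> / (1 - a^2)"
      using n pos a2 M by (intro frac_le) auto
    also have "\<dots> = K * \<bar>u - v\<bar>" by (simp add: K_def)
    finally show ?thesis .
  qed
  obtain \<phi> where \<phi>a: "\<phi> a = T a"
    and \<phi>d: "\<And>x. x\<in>{a..0} \<Longrightarrow> (\<phi> has_real_derivative G x (\<phi> x)) (at x within {a..0})"
  proof -
    from ode_exists[of a 0 K G "T a", OF a(3) K Gcont Glip] show thesis using that by blast
  qed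
  have \<phi>cont: "continuous_on {a..0} \<phi>"
    unfolding continuous_on_eq_continuous_within using \<phi>d DERIV_continuous by blast
  have Geq: "(1 - x^2) * G x y + y^2 = h x" if "\<bar>y\<bar> \<le> M" "x \<in> {a..0}" for x y
  proof -
    have "clip y = y" using that(1) unfolding clip_def by auto
    moreover have "1 - x^2 \<noteq> 0" using t2[OF that(2)] a2 by auto
    ultimately show ?thesis by (simp add: G_def)
  qed
  have \<phi>bar: "(1-x^2)*(1+2*\<beta>*x) - \<phi> x * (x - \<beta>*(1-x^2)) > 0 \<and> -x - \<phi> x > 0 \<and> \<bar>\<phi> x\<bar> < 1/\<beta>"
    if x: "x \<in> {a..0}" for x
  proof (rule sol_barrier[where y=\<phi> and p=a and q=0 and x=x, OF \<beta> fb _ _ _ \<phi>cont _ _ _ x])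
    show "-1 \<le> a" "a \<le> 0" "(0::real) \<le> 0" using a by auto
    have "a \<in> {-1..<c}" using a by auto
    from Tbar[OF this] show "(1-a^2)*(1+2*\<beta>*a) - \<phi> a * (a - \<beta>*(1-a^2)) > 0" "-a - \<phi> a > 0"
      using \<phi>a by auto
    fix t assume t: "t \<in> {a<..0}" and tb: "\<bar>\<phi> t\<bar> \<le> 1/\<beta>"
    show "\<exists>D. (\<phi> has_real_derivative D) (at t within {a..0}) \<and>
         (1 - t^2) * D + (\<phi> t)^2 = -2 * (1 - t^2) + (1 - 2 * f t)"
      using \<phi>d[of t] Geq[of "\<phi> t" t] t tb by (auto simp: M_def h_def)
  qed
  have uniq: "\<phi> x = T x" if x: "x \<in> {a..<c}" for x
  proof -
    define W where "W z = (\<phi> z - T z)^2 * exp (-(2*K) * z)" for z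
    have xc: "-1 < (x+c)/2" "(x+c)/2 < c" using x a by auto
    have Tc: "continuous_on {a..x} T"
      by (rule continuous_on_subset[OF Tcont[OF xc]]) (use x a in auto)
    have \<phi>c: "continuous_on {a..x} \<phi>"
      by (rule continuous_on_subset[OF \<phi>cont]) (use x c in auto)
    have Wc: "continuous_on {a..x} W" unfolding W_def using Tc \<phi>c by (intro continuous_intros)
    have "W x \<le> W a"
    proof (rule DERIV_nonpos_imp_decreasing_open[of a x W, OF _ _ Wc])
      show "a \<le> x" using x by simp
      fix z assume z: "a < z" "z < x"
      have zi: "z \<in> {a..0}" "z < 0" using z x c by auto
      have zc: "z \<in> {-1<..<c}" using z x a by auto
      have "(\<phi> has_real_derivative G z (\<phi> z)) (at z within {a..0})" using \<phi>d[OF zi(1)] .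
      then have d\<phi>: "(\<phi> has_real_derivative G z (\<phi> z)) (at z)"
        using at_within_Icc_at[of a z 0] z zi by simp
      obtain DT where DT: "(T has_real_derivative DT) (at z)" "(1 - z^2) * DT + (T z)^2 = h z"
        using T_sol[OF zc] by (auto simp: h_def)
      have Tb: "\<bar>T z\<bar> < M" using Tbar[of z] zc by (auto simp: M_def)
      have \<phi>b: "\<bar>\<phi> z\<bar> < M" using \<phi>bar[OF zi(1)] by (auto simp: M_def)
      have \<phi>e: "(1 - z^2) * G z (\<phi> z) + (\<phi> z)^2 = h z" using Geq[of "\<phi> z" z] \<phi>b zi by auto
      define u where "u = \<phi> z - T z"
      define e where "e = exp (-(2*K) * z)"
      have pz: "1 - z^2 \<ge> 1 - a^2" using t2[OF zi(1)] by simp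
      have pz0: "1 - z^2 > 0" using pz a2 by linarith
      have key: "(1 - z^2) * (u * (G z (\<phi> z) - DT)) = -(\<phi> z + T z) * u^2"
      proof -
        have h1: "(1 - z^2) * (G z (\<phi> z) - DT) = (T z)^2 - (\<phi> z)^2" using \<phi>e DT(2) by (simp add: algebra_simps)
        have "(1 - z^2) * (u * (G z (\<phi> z) - DT)) = u * ((1 - z^2) * (G z (\<phi> z) - DT))" by (simp add: mult_ac)
        also have "\<dots> = u * ((T z)^2 - (\<phi> z)^2)" by (simp only: h1)
        also have "\<dots> = -(\<phi> z + T z) * u^2" by (simp add: u_def power2_eq_square algebra_simps)
        finally show ?thesis .
      qed
      have "-(\<phi> z + T z) * u^2 \<le> (2*M) * u^2"
        using Tb \<phi>b by (intro mult_right_mono) auto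
      also have "(2*M) * u^2 \<le> (K * (1 - z^2)) * u^2"
      proof (rule mult_right_mono)
        have "K * (1 - z^2) = 2*M * ((1 - z^2)/(1 - a^2))" by (simp add: K_def)
        also have "\<dots> \<ge> 2*M * 1" using pz a2 M by (intro mult_left_mono) (auto simp: field_simps)
        finally show "2*M \<le> K * (1 - z^2)" by simp
      qed simp
      finally have "(1 - z^2) * (u * (G z (\<phi> z) - DT)) \<le> (1 - z^2) * (K * u^2)"
        using key by (simp add: mult_ac)
      then have uk: "u * (G z (\<phi> z) - DT) \<le> K * u^2" using pz0 by (simp add: mult_le_cancel_left)
      define Wd where "Wd = 2 * u * (G z (\<phi> z) - DT) * e - 2 * K * u^2 * e"
      have "(W has_real_derivative Wd) (at z)"
        unfolding W_def Wd_def u_def e_def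
        by (rule derivative_eq_intros d\<phi> DT(1) refl | simp add: algebra_simps power2_eq_square)+
      moreover have "Wd \<le> 0"
      proof -
        have "Wd = 2 * e * (u * (G z (\<phi> z) - DT) - K * u^2)" by (simp add: Wd_def algebra_simps)
        moreover have "e > 0" by (simp add: e_def)
        ultimately show ?thesis using uk by (simp add: mult_nonneg_nonpos)
      qed
      ultimately show "\<exists>y. (W has_real_derivative y) (at z) \<and> y \<le> 0" by blast
    qed
    also have "W a = 0" by (simp add: W_def \<phi>a)
    finally have "(\<phi> x - T x)^2 * exp (-(2*K) * x) \<le> 0" by (simp add: W_def)
    then have "(\<phi> x - T x)^2 \<le> 0" by (simp add: mult_le_0_iff)
    then show ?thesis by simp
  qed
  define S where "S x = (if x \<le> a then T x else \<phi> x)" for x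
  have ST: "\<forall>x\<in>{-1..<c}. S x = T x" using uniq by (auto simp: S_def)
  have S\<phi>: "S x = \<phi> x" if "x \<in> {a..0}" for x using that \<phi>a by (auto simp: S_def)
  have S0: "S 0 < 0" using \<phi>bar[of 0] a S\<phi>[of 0] by auto
  have Sder: "\<exists>D. (S has_real_derivative D) (at x within {-1..0}) \<and>
                 (1 - x^2) * D + (S x)^2 = -2 * (1 - x^2) + (1 - 2 * f x)" if x: "x \<in> {-1<..0}" for x
  proof (cases "x < c")
    case True
    then have xc: "x \<in> {-1<..<c}" using x by auto
    obtain D where D: "(T has_real_derivative D) (at x)"
      "(1 - x^2) * D + (T x)^2 = -2 * (1 - x^2) + (1 - 2 * f x)" using T_sol[OF xc] by blast
    have "(S has_real_derivative D) (at x)"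
      by (rule has_field_derivative_transform_within_open[OF D(1), of "{-1<..<c}"]) (use xc ST in auto)
    then have "(S has_real_derivative D) (at x within {-1..0})" by (rule has_field_derivative_at_within)
    moreover have "S x = T x" using ST xc by auto
    ultimately show ?thesis using D(2) by auto
  next
    case False
    then have xa: "x \<in> {a..0}" "a < x" using x a by auto
    have "(S has_real_derivative G x (\<phi> x)) (at x within {a..0})"
      by (rule has_field_derivative_transform_within[OF \<phi>d[OF xa(1)], where d=1]) (use xa S\<phi> in auto)
    moreover have "at x within {a..0} = at x within {-1..0}"
      by (rule at_within_nhd[of x "{a<..}"]) (use xa a in auto)
    ultimately have "(S has_real_derivative G x (\<phi> x)) (at x within {-1..0})" by simp
    moreover have "(1 - x^2) * G x (\<phi> x) + (S x)^2 = -2 * (1 - x^2) + (1 - 2 * f x)"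
      using Geq[of "\<phi> x" x] \<phi>bar[OF xa(1)] xa S\<phi>[OF xa(1)] by (auto simp: M_def h_def)
    ultimately show ?thesis by blast
  qed
  have Scont: "continuous_on {-1..0} S"
    unfolding continuous_on_eq_continuous_within
  proof
    fix x :: real assume x: "x \<in> {-1..0}"
    show "continuous (at x within {-1..0}) S"
    proof (cases "x = -1")
      case True
      have "continuous (at (-1) within {-1..0}) T"
        using T_cont by (simp only: at_within_Icc_at_right[of "-1::real" 0])
      then have "continuous (at (-1) within {-1..0}) S"
      proof (rule continuous_transform_within[where \<delta>="c+1"])
        show "0 < c + 1" using c by simp
        show "-1 \<in> {-1..(0::real)}" by simp
        fix x' assume "x' \<in> {-1..(0::real)}" "dist x' (-1) < c + 1"
        then have "x' \<in> {-1..<c}" by (auto simp: dist_real_def)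
        then show "T x' = S x'" using ST by auto
      qed
      then show ?thesis using True by simp
    next
      case False
      then have "x \<in> {-1<..0}" using x by auto
      then obtain D where "(S has_real_derivative D) (at x within {-1..0})" using Sder by blast
      then show ?thesis by (rule DERIV_continuous)
    qed
  qed
  show ?thesis
    by (rule exI[of _ S]) (use ST Scont Sder S0 in blast)
qed
end
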